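(* Let $g\ge1$ and let $\mathcal M_{2g+1}$, $V^{(2g+1)}$, the $\mathrm{CS}_2$ flows $\partial/\partial t_j$, $\mathcal M_A$, $\widetilde{\mathcal S}$, $E$ and $\widetilde{\mathcal Q}$ be as in the context. For $i=0,\dots,g-1$ consider the vector field on $\mathcal M_A$ $$\frac{dX(\lambda)}{dt}=\big[(\lambda^{i-g}X(\lambda))_+,X(\lambda)\big],$$ which is tangent to $\widetilde{\mathcal S}$. Then its projection onto $T\widetilde{\mathcal Q}$ along $E$ (according to the splitting $T\widetilde{\mathcal S}=T\widetilde{\mathcal Q}\oplus E$ at points of $\widetilde{\mathcal Q}$) coincides, under the identification of $\mathcal M_{2g+1}$ with $\widetilde{\mathcal Q}$ via $h\mapsto V^{(2g+1)}(h)$, with the $\mathrm{KdV}_{2g+1}$ flow, i.e. with the restriction to $\mathcal M_{2g+1}$ of the $\mathrm{CS}_2$ flow $\partial/\partial t_{2i+1}$. Equivalently, the projections of these vector fields to the quotient $\widetilde{\mathcal N}=\widetilde{\mathcal S}/E$ coincide with the $\mathrm{KdV}_{2g+1}$ systems.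
   Context: Given a formal Laurent series $h=z+\sum_{l\ge1}h_lz^{-l}$, put $\lambda=z^2$ and define $H^{(0)}=1$, $H^{(1)}=h$, $H^{(2)}=z^2$, $H^{(k+2)}=z^2H^{(k)}-H^k_1h-H^k_2$ ($k\ge1$), where $H^k_l$ is the coefficient of $z^{-l}$ in $H^{(k)}$ (so $H^1_l=h_l$). Each $H^{(k)}$ and each series $H^{(j+1)}+\sum_{l=1}^jh_lH^{(j-l)}+H^j_1$ can be written uniquely as $a(\lambda)+b(\lambda)h$ with $a,b$ polynomials. $V^{(j)}$ is the $2\times2$ polynomial matrix with first row $(p_j,q_j)$ where $H^{(j)}=p_j+q_jh$, and second row $(a_j,b_j)$ where $H^{(j+1)}+\sum_{l=1}^jh_lH^{(j-l)}+H^j_1=a_j+b_jh$. The $\mathrm{CS}_2$ flows are $\partial h/\partial t_j=-hH^{(j)}+H^{(j+1)}+\sum_{l=1}^jh_lH^{(j-l)}+H^j_1$; they commute. $\mathcal M_{2g+1}$ is the set of $h$ with $\partial h/\partial t_{2g+1}=0$; it is invariant under all $\mathrm{CS}_2$ flows, coordinatized by $(h_1,\dots,h_{2g+1})$, and the restricted flows form the $\mathrm{KdV}_{2g+1}$ system (the stationary reductions of KdV). $\mathcal M_A=\{X(\lambda)=\lambda^{g+1}A+\sum_{i=0}^g\lambda^iX_i\mid X_i\in\mathfrak{sl}(2)\}$ with $A=\begin{pmatrix}0&0\\1&0\end{pmatrix}$; $H_i$ is the coefficient of $\lambda^i$ in $\tfrac12\mathrm{Tr}\,X(\lambda)^2$;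 $\widetilde{\mathcal S}$ is the submanifold $H_{2g+1}=1$, $H_i=0$ for $g+1\le i\le2g$; $E$ is the rank-one distribution on $\widetilde{\mathcal S}$ spanned by $\dot X(\lambda)=[A,X(\lambda)]$; $\widetilde{\mathcal Q}\subset\widetilde{\mathcal S}$ is the image of $h\mapsto V^{(2g+1)}(h)$ on $\mathcal M_{2g+1}$, which lies in $\widetilde{\mathcal S}$, is injective, and is transversal to $E$. $(\cdot)_+$ denotes projection onto nonnegative powers of $\lambda$. *)

theory Defs
  imports "HOL-Analysis.Analysis" "HOL-Computational_Algebra.Polynomial"
          "HOL-Computational_Algebra.Formal_Laurent_Series"
begin

text \<open>Formal Laurent series in z are complex fls; z = fls_X, lambda = z^2.
  The coefficient of z^(-l) of a series F is fls_nth F (- int l).\<close>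

definition is_h :: "complex fls \<Rightarrow> bool" where
  "is_h h \<longleftrightarrow> fls_nth h 1 = 1 \<and> (\<forall>n::int. n \<ge> 0 \<and> n \<noteq> 1 \<longrightarrow> fls_nth h n = 0)"

definition hc :: "complex fls \<Rightarrow> nat \<Rightarrow> complex" where
  "hc F l = fls_nth F (- int l)"

fun Hs :: "complex fls \<Rightarrow> nat \<Rightarrow> complex fls" where
  "Hs h 0 = 1"
| "Hs h (Suc 0) = h"
| "Hs h (Suc (Suc 0)) = fls_X ^ 2"
| "Hs h (Suc (Suc (Suc k))) =
     fls_X ^ 2 * Hs h (Suc k) - fls_const (hc (Hs h (Suc k)) 1) * h
       - fls_const (hc (Hs h (Suc k)) 2)"

definition Rs :: "complex fls \<Rightarrow> nat \<Rightarrow> complex fls" where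
  "Rs h j = Hs h (Suc j) + (\<Sum>l=1..j. fls_const (hc h l) * Hs h (j - l))
            + fls_const (hc (Hs h j) 1)"

definition flow :: "complex fls \<Rightarrow> nat \<Rightarrow> complex fls" where
  "flow h j = - h * Hs h j + Rs h j"

definition eval_lam :: "complex poly \<Rightarrow> complex fls" where
  "eval_lam p = poly (map_poly fls_const p) (fls_X ^ 2)"

definition decomp :: "complex fls \<Rightarrow> complex fls \<Rightarrow> complex poly \<times> complex poly" where
  "decomp h F = (THE ab. F = eval_lam (fst ab) + eval_lam (snd ab) * h)"

definition mat2 :: "'a \<Rightarrow> 'a \<Rightarrow> 'a \<Rightarrow> 'a \<Rightarrow> 'a ^ 2 ^ 2" where
  "mat2 a b c d = (\<chi> r s. if r = 1 then (if s = 1 then a else b) else (if s = 1 then c else d))"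

definition Vmat :: "complex fls \<Rightarrow> nat \<Rightarrow> complex poly ^ 2 ^ 2" where
  "Vmat h j = mat2 (fst (decomp h (Hs h j))) (snd (decomp h (Hs h j)))
                   (fst (decomp h (Rs h j))) (snd (decomp h (Rs h j)))"

definition Amat :: "complex poly ^ 2 ^ 2" where
  "Amat = mat2 0 0 1 0"

definition comm :: "complex poly ^ 2 ^ 2 \<Rightarrow> complex poly ^ 2 ^ 2 \<Rightarrow> complex poly ^ 2 ^ 2" where
  "comm P Q = P ** Q - Q ** P"

definition cscale :: "complex \<Rightarrow> complex poly ^ 2 ^ 2 \<Rightarrow> complex poly ^ 2 ^ 2" where
  "cscale c M = (\<chi> r s. smult c (M $ r $ s))"

text \<open>(lambda^(-k) p)_+ : drop the k lowest coefficients.\<close>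
definition plus_shift :: "nat \<Rightarrow> complex poly \<Rightarrow> complex poly" where
  "plus_shift k p = Poly (drop k (coeffs p))"

definition plus_mat :: "nat \<Rightarrow> complex poly ^ 2 ^ 2 \<Rightarrow> complex poly ^ 2 ^ 2" where
  "plus_mat k M = (\<chi> r s. plus_shift k (M $ r $ s))"

end

theory Submission
  imports Defs
begin


definition degle :: "complex fls \<Rightarrow> int \<Rightarrow> bool" where
  "degle F d \<longleftrightarrow> (\<forall>n>d. fls_nth F n = 0)"

lemma degleD: "degle F d \<Longrightarrow> n > d \<Longrightarrow> fls_nth F n = 0"
  by (simp add: degle_def)

lemma degle_mono: "degle F d \<Longrightarrow> d \<le> d' \<Longrightarrow> degle F d'"
  by (simp add: degle_def)

lemma degle_add: "degle F d \<Longrightarrow> degle G d \<Longrightarrow> degle (F + G) d"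
  by (simp add: degle_def)

lemma degle_diff: "degle F d \<Longrightarrow> degle G d \<Longrightarrow> degle (F - G) d"
  by (simp add: degle_def)

lemma degle_uminus: "degle F d \<Longrightarrow> degle (- F) d"
  by (simp add: degle_def)

lemma degle_0[simp]: "degle 0 d"
  by (simp add: degle_def)

lemma degle_const_mult: "degle F d \<Longrightarrow> degle (fls_const c * F) d"
  by (simp add: degle_def)

lemma degle_const: "d \<ge> 0 \<Longrightarrow> degle (fls_const c) d"
  by (simp add: degle_def)

lemma degle_mult: "degle F a \<Longrightarrow> degle G b \<Longrightarrow> degle (F * G) (a + b)"
  unfolding degle_def
proof (intro allI impI)
  fix n assume F: "\<forall>n>a. fls_nth F n = 0" and G: "\<forall>n>b. fls_nth G n = 0" and n: "n > a + b"
  have "fls_nth (F * G) n = (\<Sum>i=fls_subdegree F..n - fls_subdegree G. fls_nth F i * fls_nth G (n - i))"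
    by (rule fls_times_nth(2))
  also have "\<dots> = 0"
  proof (intro sum.neutral ballI)
    fix i assume "i \<in> {fls_subdegree F..n - fls_subdegree G}"
    show "fls_nth F i * fls_nth G (n - i) = 0"
    proof (cases "i > a")
      case True then show ?thesis using F by simp
    next
      case False then have "n - i > b" using n by simp
      then show ?thesis using G by simp
    qed
  qed
  finally show "fls_nth (F * G) n = 0" .
qed

lemma degle_shift: "degle F d \<Longrightarrow> degle (fls_shift k F) (d - k)"
  by (simp add: degle_def)

lemma degle_Xpow: "degle (fls_X ^ n) (int n)"
  by (simp add: degle_def)

lemma eval_lam_pCons: "eval_lam (pCons a p) = fls_const a + fls_X ^ 2 * eval_lam p"
  by (simp add: eval_lam_def map_poly_pCons)

lemma eval_lam_0[simp]: "eval_lam 0 = 0"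
  by (simp add: eval_lam_def)

lemma eval_lam_const[simp]: "eval_lam [:c:] = fls_const c"
  by (simp add: eval_lam_pCons)

lemma eval_lam_1[simp]: "eval_lam 1 = 1"
  by (simp add: eval_lam_pCons one_pCons)

lemma eval_lam_X: "eval_lam [:0, 1:] = fls_X ^ 2"
  by (simp add: eval_lam_pCons)




lemma fls_const_add': "fls_const (a + b) = fls_const a + (fls_const b :: complex fls)"
  by (simp add: fls_plus_const)

lemma fls_const_mult': "fls_const (a * b) = fls_const a * (fls_const b :: complex fls)"
  by simp

lemma eval_lam_add[simp]: "eval_lam (p + q) = eval_lam p + eval_lam q"
proof (induction p arbitrary: q rule: pCons_induct)
  case 0 then show ?case by simp
next
  case (pCons a p)
  show ?case
  proof (cases q rule: pCons_cases)
    case (pCons b q')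
    have "eval_lam (pCons a p + q) = fls_const (a+b) + fls_X ^ 2 * eval_lam (p + q')"
      by (simp add: pCons eval_lam_pCons)
    also have "\<dots> = fls_const a + fls_const b + fls_X ^ 2 * (eval_lam p + eval_lam q')"
      using pCons.IH by (simp only: fls_const_add')
    also have "\<dots> = eval_lam (pCons a p) + eval_lam q"
      by (simp add: pCons eval_lam_pCons distrib_left)
    finally show ?thesis .
  qed
qed
lemma eval_lam_uminus[simp]: "eval_lam (- p) = - eval_lam p"
proof -
  have "eval_lam (- p) + eval_lam p = 0" by (simp flip: eval_lam_add)
  then show ?thesis by (simp add: eq_neg_iff_add_eq_0)
qed

lemma eval_lam_diff[simp]: "eval_lam (p - q) = eval_lam p - eval_lam q"
  using eval_lam_add[of p "- q"] by simp

lemma eval_lam_smult[simp]: "eval_lam (smult c p) = fls_const c * eval_lam p"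
proof (induction p rule: pCons_induct)
  case 0 then show ?case by simp
next
  case (pCons a p)
  then show ?case by (simp add: eval_lam_pCons distrib_left fls_const_mult'[symmetric] mult.left_commute del: fls_const_mult_const)
qed

lemma eval_lam_mult[simp]: "eval_lam (p * q) = eval_lam p * eval_lam q"
proof (induction p rule: pCons_induct)
  case 0 then show ?case by simp
next
  case (pCons a p)
  have "eval_lam (pCons a p * q) = eval_lam (smult a q) + eval_lam (pCons 0 (p * q))"
    by (simp only: mult_pCons_left eval_lam_add)
  also have "\<dots> = fls_const a * eval_lam q + fls_X ^ 2 * (eval_lam p * eval_lam q)"
    using pCons.IH by (simp add: eval_lam_pCons)
  finally show ?case by (simp add: eval_lam_pCons distrib_right mult.assoc)
qed

lemma fls_X2_times_nth: "fls_nth (fls_X ^ 2 * F) n = fls_nth F (n - 2)"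
  by (simp add: fls_X_power_times_conv_shift)

lemma eval_lam_nth:
  "fls_nth (eval_lam p) n = (if 0 \<le> n \<and> even n then coeff p (nat (n div 2)) else 0)"
proof (induction p arbitrary: n rule: pCons_induct)
  case 0 then show ?case by simp
next
  case (pCons a p)
  have E: "fls_nth (eval_lam (pCons a p)) n = (if n = 0 then a else 0) + fls_nth (eval_lam p) (n - 2)"
    by (simp add: eval_lam_pCons fls_X2_times_nth)
  show ?case
  proof (cases "0 \<le> n \<and> even n")
    case True
    define m where "m = nat (n div 2)"
    have m: "n = 2 * int m" using True by (auto simp: m_def elim!: evenE)
    show ?thesis
    proof (cases m)
      case 0 then show ?thesis using m pCons.IH[of "-2"] E by simp
    next
      case (Suc k)
      then have "n - 2 = 2 * int k" using m by simp
      moreover have "nat (n div 2) = Suc k" using m Suc by simp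
      ultimately show ?thesis using m Suc pCons.IH[of "n-2"] E by (simp add: coeff_pCons)
    qed
  next
    case False
    then have "n \<noteq> 0" by auto
    moreover have "\<not> (0 \<le> n - 2 \<and> even (n - 2))" using False by auto
    ultimately show ?thesis using pCons.IH[of "n-2"] False E by auto
  qed
qed



lemma is_h_nth: "is_h h \<Longrightarrow> n \<ge> 0 \<Longrightarrow> fls_nth h n = (if n = 1 then 1 else 0)"
  by (auto simp: is_h_def)

lemma is_h_low: "is_h h \<Longrightarrow> degle (h - fls_X) (-1)"
  by (auto simp: degle_def is_h_def)

lemma degle_h: "is_h h \<Longrightarrow> degle h 1"
  by (auto simp: degle_def is_h_def)

lemma X_times_nth: "fls_nth (fls_X * (F :: complex fls)) n = fls_nth F (n - 1)"
  unfolding fls_X_times_conv_shift fls_shift_nth by simp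

lemma times_X_nth: "fls_nth ((F :: complex fls) * fls_X) n = fls_nth F (n - 1)"
  unfolding fls_X_times_conv_shift fls_shift_nth by simp

lemma degle_eval: "degle (eval_lam p) (2 * int (degree p))"
  unfolding degle_def eval_lam_nth
proof (intro allI impI)
  fix n :: int assume "2 * int (degree p) < n"
  then have "nat (n div 2) > degree p \<or> odd n" by auto
  then show "(if 0 \<le> n \<and> even n then coeff p (nat (n div 2)) else 0) = 0"
    by (auto simp: coeff_eq_0)
qed

lemma uniq0:
  assumes h: "is_h h" and L: "degle (eval_lam a + eval_lam b * h) (-1)"
  shows "a = 0 \<and> b = 0"
proof -
  have b0: "b = 0"
  proof (rule ccontr)
    assume "b \<noteq> 0"
    define d where "d = degree b"
    define N where "N = 2 * int d + 1"
    have "fls_nth (eval_lam b * (h - fls_X)) N = 0"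
      using degle_mult[OF degle_eval[of b] is_h_low[OF h]] by (rule degleD) (simp add: N_def d_def)
    moreover have "fls_nth (eval_lam b * fls_X) N = coeff b d"
      by (simp add: times_X_nth eval_lam_nth N_def)
    moreover have "fls_nth (eval_lam a) N = 0"
      by (simp add: eval_lam_nth N_def)
    moreover have "fls_nth (eval_lam a + eval_lam b * h) N = 0"
      using L by (rule degleD) (simp add: N_def)
    moreover have "eval_lam b * h = eval_lam b * fls_X + eval_lam b * (h - fls_X)"
      by (simp add: algebra_simps)
    ultimately have "coeff b d = 0" by simp
    then show False using \<open>b \<noteq> 0\<close> by (simp add: d_def)
  qed
  have "a = 0"
  proof (rule poly_eqI)
    fix j
    have "fls_nth (eval_lam a) (2 * int j) = 0"
      using L b0 by (intro degleD) auto
    then show "coeff a j = coeff 0 j" by (simp add: eval_lam_nth)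
  qed
  with b0 show ?thesis by simp
qed

definition inW :: "complex fls \<Rightarrow> complex fls \<Rightarrow> bool" where
  "inW h F \<longleftrightarrow> (\<exists>a b. F = eval_lam a + eval_lam b * h)"

lemma decomp_eq:
  assumes h: "is_h h" and F: "F = eval_lam a + eval_lam b * h"
  shows "decomp h F = (a, b)"
  unfolding decomp_def
proof (rule the_equality)
  show "F = eval_lam (fst (a, b)) + eval_lam (snd (a, b)) * h" using F by simp
next
  fix ab assume ab: "F = eval_lam (fst ab) + eval_lam (snd ab) * h"
  have "eval_lam (fst ab - a) + eval_lam (snd ab - b) * h = 0"
  proof -
    have "eval_lam (fst ab - a) + eval_lam (snd ab - b) * h
        = (eval_lam (fst ab) + eval_lam (snd ab) * h) - (eval_lam a + eval_lam b * h)"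
      by (simp add: left_diff_distrib)
    also have "\<dots> = 0" using ab F by simp
    finally show ?thesis .
  qed
  then have "degle (eval_lam (fst ab - a) + eval_lam (snd ab - b) * h) (-1)" by simp
  then have "fst ab - a = 0 \<and> snd ab - b = 0" using uniq0[OF h] by blast
  then show "ab = (a, b)" by (simp add: prod_eq_iff)
qed

lemma decomp_spec:
  assumes h: "is_h h" and F: "inW h F"
  shows "F = eval_lam (fst (decomp h F)) + eval_lam (snd (decomp h F)) * h"
proof -
  obtain a b where "F = eval_lam a + eval_lam b * h" using F by (auto simp: inW_def)
  then show ?thesis using decomp_eq[OF h] by simp
qed

lemma inW_add: "inW h F \<Longrightarrow> inW h G \<Longrightarrow> inW h (F + G)"
  unfolding inW_def
proof (elim exE)
  fix a b a' b' assume "F = eval_lam a + eval_lam b * h" "G = eval_lam a' + eval_lam b' * h"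
  then have "F + G = eval_lam (a + a') + eval_lam (b + b') * h"
    by (simp add: distrib_right)
  then show "\<exists>a b. F + G = eval_lam a + eval_lam b * h" by blast
qed

lemma inW_const_mult: "inW h F \<Longrightarrow> inW h (fls_const c * F)"
  unfolding inW_def
proof (elim exE)
  fix a b assume "F = eval_lam a + eval_lam b * h"
  then have "fls_const c * F = eval_lam (smult c a) + eval_lam (smult c b) * h"
    by (simp add: algebra_simps)
  then show "\<exists>a b. fls_const c * F = eval_lam a + eval_lam b * h" by blast
qed

lemma inW_const: "inW h (fls_const c)"
  unfolding inW_def by (rule exI[of _ "[:c:]"], rule exI[of _ 0]) simp

lemma inW_0: "inW h 0"
  using inW_const[of h 0] by simp

lemma inW_sum: "(\<And>x. x \<in> S \<Longrightarrow> inW h (f x)) \<Longrightarrow> inW h (sum f S)"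
proof (induction S rule: infinite_finite_induct)
  case (infinite A) then show ?case by (simp add: inW_0)
next
  case empty then show ?case by (simp add: inW_0)
next
  case (insert x F) then show ?case by (simp add: inW_add)
qed

lemma Hs_inW: "inW h (Hs h k)"
proof (induction h k rule: Hs.induct)
  case (1 h) then show ?case using inW_const[of h 1] by simp
next
  case (2 h) then show ?case unfolding inW_def by (rule exI[of _ 0], rule exI[of _ 1]) simp
next
  case (3 h) then show ?case unfolding inW_def by (rule exI[of _ "[:0,1:]"], rule exI[of _ 0]) (simp add: eval_lam_X)
next
  case (4 h k)
  then obtain a b where ab: "Hs h (Suc k) = eval_lam a + eval_lam b * h" by (auto simp: inW_def)
  define c1 where "c1 = hc (Hs h (Suc k)) 1"
  define c2 where "c2 = hc (Hs h (Suc k)) 2"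
  have "Hs h (Suc (Suc (Suc k))) = eval_lam ([:0,1:] * a - [:c2:]) + eval_lam ([:0,1:] * b - [:c1:]) * h"
  proof -
    have "Hs h (Suc (Suc (Suc k))) = fls_X ^ 2 * Hs h (Suc k) - fls_const c1 * h - fls_const c2"
      by (simp add: c1_def c2_def)
    also have "\<dots> = eval_lam ([:0,1:] * a - [:c2:]) + eval_lam ([:0,1:] * b - [:c1:]) * h"
      unfolding ab eval_lam_diff eval_lam_mult eval_lam_X eval_lam_const
      by (simp add: ring_distribs mult.assoc)
    finally show ?thesis .
  qed
  then show ?case unfolding inW_def by blast
qed

lemma Rs_inW: "inW h (Rs h j)"
  unfolding Rs_def
  by (intro inW_add Hs_inW inW_sum inW_const_mult inW_const)



lemma degle_sum: "(\<And>x. x \<in> S \<Longrightarrow> degle (f x) d) \<Longrightarrow> degle (sum f S) d"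
proof (induction S rule: infinite_finite_induct)
  case (infinite A) then show ?case by simp
next
  case empty then show ?case by simp
next
  case (insert x F) then show ?case by (simp add: degle_add)
qed

lemma fls_nth_sum: "fls_nth (sum f S) n = (\<Sum>x\<in>S. fls_nth (f x) n)"
proof (induction S rule: infinite_finite_induct)
  case (infinite A) then show ?case by simp
next
  case empty then show ?case by simp
next
  case (insert x F) then show ?case by simp
qed

lemma XT_low: "degle T (-1) \<Longrightarrow> degle (fls_X * T - fls_const (fls_nth T (-1))) (-1)"
  unfolding degle_def by (auto simp: X_times_nth)

lemma hT_low:
  assumes h: "is_h h" and T: "degle T (-1)"
  shows "degle (h * T - fls_const (fls_nth T (-1))) (-1)"
proof -
  have eq: "h * T - fls_const (fls_nth T (-1)) = (fls_X * T - fls_const (fls_nth T (-1))) + (h - fls_X) * T"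
    by (simp add: algebra_simps)
  have hX: "degle ((h - fls_X) * T) (-1)"
    using degle_mult[OF is_h_low[OF h] T] by (rule degle_mono) simp
  show ?thesis unfolding eq by (rule degle_add[OF XT_low[OF T] hX])
qed

lemma Hs_low: "is_h h \<Longrightarrow> degle (Hs h k - fls_X ^ k) (-1)"
proof (induction h k rule: Hs.induct)
  case (1 h) then show ?case by simp
next
  case (2 h) then show ?case using is_h_low by simp
next
  case (3 h) then show ?case by (simp add: power2_eq_square)
next
  case (4 h k)
  define T where "T = Hs h (Suc k) - fls_X ^ Suc k"
  have T: "degle T (-1)" using 4 by (simp add: T_def)
  have c1: "hc (Hs h (Suc k)) 1 = fls_nth T (-1)" by (simp add: T_def hc_def)
  have c2: "hc (Hs h (Suc k)) 2 = fls_nth T (-2)" by (simp add: T_def hc_def)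
  have E0: "Hs h (Suc (Suc (Suc k))) = fls_X ^ 2 * Hs h (Suc k) - fls_const (fls_nth T (-1)) * h - fls_const (fls_nth T (-2))"
    by (simp only: Hs.simps c1 c2)
  have E: "Hs h (Suc (Suc (Suc k))) - fls_X ^ Suc (Suc (Suc k))
      = fls_X ^ 2 * T - fls_const (fls_nth T (-1)) * h - fls_const (fls_nth T (-2))"
    unfolding E0 by (simp add: T_def algebra_simps power_add[symmetric])
  show ?case unfolding E degle_def
  proof (intro allI impI)
    fix n :: int assume n: "- 1 < n"
    have hn: "fls_nth h n = (if n = 1 then 1 else 0)" using is_h_nth[OF "4.prems"] n by simp
    have "fls_nth T (n - 2) = 0" if "n \<ge> 2" using T that by (intro degleD) auto
    then show "fls_nth (fls_X ^ 2 * T - fls_const (fls_nth T (-1)) * h - fls_const (fls_nth T (-2))) n = 0"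
      using n by (auto simp: fls_X2_times_nth hn)
  qed
qed

lemma mid_low:
  assumes h: "is_h h"
  shows "degle ((\<Sum>l=1..j. fls_const (hc h l) * fls_X ^ (j - l)) - (h - fls_X) * fls_X ^ j) (-1)"
  unfolding degle_def
proof (intro allI impI)
  fix n :: int assume n: "-1 < n"
  have A: "fls_nth ((h - fls_X) * fls_X ^ j) n = fls_nth h (n - int j) - (if n - int j = 1 then 1 else 0)"
    by (simp add: fls_X_power_times_conv_shift)
  have B: "fls_nth (\<Sum>l=1..j. fls_const (hc h l) * fls_X ^ (j - l)) n
      = (\<Sum>l=1..j. (if n = int (j - l) then hc h l else 0))"
    by (simp add: fls_nth_sum if_distrib cong: if_cong)
  show "fls_nth ((\<Sum>l=1..j. fls_const (hc h l) * fls_X ^ (j - l)) - (h - fls_X) * fls_X ^ j) n = 0"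
  proof (cases "n \<ge> int j")
    case True
    have "(\<Sum>l=1..j. (if n = int (j - l) then hc h l else 0)) = 0"
      using True by (intro sum.neutral) auto
    moreover have "fls_nth h (n - int j) = (if n - int j = 1 then 1 else 0)"
      using is_h_nth[OF h, of "n - int j"] True by simp
    ultimately show ?thesis unfolding fls_minus_nth A B by simp
  next
    case False
    have "(\<Sum>l=1..j. (if n = int (j - l) then hc h l else 0))
        = (\<Sum>l=1..j. (if l = j - nat n then hc h l else 0))"
      using False n by (intro sum.cong) auto
    also have "\<dots> = hc h (j - nat n)"
      using False n by (simp add: sum.delta)
    also have "\<dots> = fls_nth h (n - int j)"
      using False n by (simp add: hc_def)
    finally show ?thesis using False unfolding fls_minus_nth A B by simp
  qed
qed

lemma flow_low:
  assumes h: "is_h h"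
  shows "degle (flow h j) (-1)"
proof -
  define T where "T k = Hs h k - fls_X ^ k" for k
  define S2 where "S2 = (\<Sum>l=1..j. fls_const (hc h l) * T (j - l))"
  define S3 where "S3 = (\<Sum>l=1..j. fls_const (hc h l) * fls_X ^ (j - l))"
  have S: "(\<Sum>l=1..j. fls_const (hc h l) * Hs h (j - l)) = S2 + S3"
    by (simp add: S2_def S3_def T_def sum.distrib[symmetric] algebra_simps)
  have C: "hc (Hs h j) 1 = fls_nth (T j) (-1)" by (simp add: T_def hc_def)
  have H1: "Hs h (Suc j) = T (Suc j) + fls_X * fls_X ^ j" by (simp add: T_def)
  have H0: "Hs h j = T j + fls_X ^ j" by (simp add: T_def)
  have E: "flow h j = T (Suc j) + S2 + (S3 - (h - fls_X) * fls_X ^ j)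
      + (- (fls_X * T j - fls_const (fls_nth (T j) (-1)))) - (h - fls_X) * T j"
    unfolding flow_def Rs_def S C unfolding H1 H0
    apply (simp add: algebra_simps)
    done
  have d1: "degle (T (Suc j)) (-1)" using Hs_low[OF h, of "Suc j"] by (simp only: T_def)
  have d2: "degle S2 (-1)" unfolding S2_def
    using Hs_low[OF h] by (intro degle_sum degle_const_mult) (simp add: T_def)
  have d3: "degle (S3 - (h - fls_X) * fls_X ^ j) (-1)" using mid_low[OF h] by (simp add: S3_def)
  have Tj: "degle (T j) (-1)" using Hs_low[OF h] by (simp add: T_def)
  have d4: "degle (- (fls_X * T j - fls_const (fls_nth (T j) (-1)))) (-1)"
    by (intro degle_uminus XT_low Tj)
  have d5: "degle ((h - fls_X) * T j) (-1)"
    using degle_mult[OF is_h_low[OF h] Tj] by (rule degle_mono) simp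
  show ?thesis unfolding E
    by (intro degle_add degle_diff d1 d2 d3 d4 d5)
qed



definition cv :: "(complex \<Rightarrow> complex) \<Rightarrow> bool" where
  "cv F \<longleftrightarrow> (\<exists>L. (F \<longlongrightarrow> L) (at 0))"

lemma cv_const[simp]: "cv (\<lambda>e. c)"
  unfolding cv_def by (auto intro: tendsto_const)

lemma cv_id: "cv (\<lambda>e. e)"
  unfolding cv_def by (auto intro: tendsto_ident_at)

lemma cv_add: "cv F \<Longrightarrow> cv G \<Longrightarrow> cv (\<lambda>e. F e + G e)"
  unfolding cv_def by (auto intro: tendsto_add)

lemma cv_diff: "cv F \<Longrightarrow> cv G \<Longrightarrow> cv (\<lambda>e. F e - G e)"
  unfolding cv_def by (auto intro: tendsto_diff)

lemma cv_mult: "cv F \<Longrightarrow> cv G \<Longrightarrow> cv (\<lambda>e. F e * G e)"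
  unfolding cv_def by (auto intro: tendsto_mult)

lemma cv_ev: "eventually (\<lambda>e. F e = G e) (at 0) \<Longrightarrow> cv G \<Longrightarrow> cv F"
  unfolding cv_def using tendsto_cong by blast

lemma deriv_lemma:
  assumes F0: "F 0 = a" and E: "\<And>e. e \<noteq> 0 \<Longrightarrow> F e = a + e * b + e^2 * B e" and B: "cv B"
  shows "(F has_field_derivative b) (at 0)"
proof -
  obtain L where L: "(B \<longlongrightarrow> L) (at 0)" using B by (auto simp: cv_def)
  have "((\<lambda>e. b + e * B e) \<longlongrightarrow> b + 0 * L) (at 0)"
    by (intro tendsto_intros L)
  then have lim: "((\<lambda>e. b + e * B e) \<longlongrightarrow> b) (at 0)" by simp
  have ev: "eventually (\<lambda>e. (F e - F 0) / (e - 0) = b + e * B e) (at 0)"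
    unfolding eventually_at_filter
    by (intro always_eventually allI impI) (simp add: E F0 field_simps power2_eq_square)
  show ?thesis unfolding has_field_derivative_iff
    using tendsto_cong[OF ev] lim by blast
qed

lemma eval_lam_monom: "eval_lam (monom c j) = fls_const c * fls_X ^ (2 * j)"
proof (induction j)
  case 0 then show ?case by (simp add: monom_0)
next
  case (Suc j) then show ?case
    by (simp add: monom_Suc eval_lam_pCons power_add mult.left_commute power2_eq_square)
qed

lemma is_h_eps:
  assumes h: "is_h h" and f: "degle f (-1)"
  shows "is_h (h + fls_const e * f)"
  using h f unfolding is_h_def degle_def by auto

lemma bound:
  fixes h f :: "complex fls"
  assumes h: "is_h h" and f: "degle f (-1)"
  shows "\<And>\<alpha> \<beta> G. (\<And>e. degle (G e) (int d - 1)) \<Longrightarrow> (\<And>n. cv (\<lambda>e. fls_nth (G e) n)) \<Longrightarrow>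
     eventually (\<lambda>e. degle (eval_lam (\<alpha> e) + eval_lam (\<beta> e) * (h + fls_const e * f) - G e) (-1)) (at 0) \<Longrightarrow>
     (\<forall>j. cv (\<lambda>e. coeff (\<alpha> e) j)) \<and> (\<forall>j. cv (\<lambda>e. coeff (\<beta> e) j)) \<and>
     (\<forall>n. cv (\<lambda>e. fls_nth (eval_lam (\<alpha> e) + eval_lam (\<beta> e) * (h + fls_const e * f)) n))"
proof (induction d)
  case 0
  have ev: "eventually (\<lambda>e. \<alpha> e = 0 \<and> \<beta> e = 0) (at 0)"
    using "0.prems"(3)
  proof (rule eventually_mono)
    fix e assume "degle (eval_lam (\<alpha> e) + eval_lam (\<beta> e) * (h + fls_const e * f) - G e) (-1)"
    moreover have "degle (G e) (-1)" using "0.prems"(1)[of e] by simp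
    ultimately have "degle (eval_lam (\<alpha> e) + eval_lam (\<beta> e) * (h + fls_const e * f)) (-1)"
      using degle_add by fastforce
    then show "\<alpha> e = 0 \<and> \<beta> e = 0" using uniq0[OF is_h_eps[OF h f]] by blast
  qed
  show ?case
  proof (intro conjI allI)
    fix j show "cv (\<lambda>e. coeff (\<alpha> e) j)"
      by (rule cv_ev[OF eventually_mono[OF ev], of _ "\<lambda>e. 0"]) auto
  next
    fix j show "cv (\<lambda>e. coeff (\<beta> e) j)"
      by (rule cv_ev[OF eventually_mono[OF ev], of _ "\<lambda>e. 0"]) auto
  next
    fix n show "cv (\<lambda>e. fls_nth (eval_lam (\<alpha> e) + eval_lam (\<beta> e) * (h + fls_const e * f)) n)"
      by (rule cv_ev[OF eventually_mono[OF ev], of _ "\<lambda>e. 0"]) auto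
  qed
next
  case (Suc d)
  define c where "c e = fls_nth (G e) (int d)" for e
  have cvc: "cv c" unfolding c_def by (rule Suc.prems(2))
  define j where "j = d div 2"
  show ?case
  proof (cases "even d")
    case True
    then have dj: "int d = 2 * int j" by (auto simp: j_def elim!: evenE)
    define \<alpha>' where "\<alpha>' e = \<alpha> e - monom (c e) j" for e
    define G' where "G' e = G e - fls_const (c e) * fls_X ^ (2 * j)" for e
    have IH: "(\<forall>j. cv (\<lambda>e. coeff (\<alpha>' e) j)) \<and> (\<forall>j. cv (\<lambda>e. coeff (\<beta> e) j)) \<and>
     (\<forall>n. cv (\<lambda>e. fls_nth (eval_lam (\<alpha>' e) + eval_lam (\<beta> e) * (h + fls_const e * f)) n))"
    proof (rule Suc.IH)
      fix e show "degle (G' e) (int d - 1)"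
        unfolding degle_def
      proof (intro allI impI)
        fix n :: int assume n: "int d - 1 < n"
        show "fls_nth (G' e) n = 0"
        proof (cases "n = int d")
          case True then show ?thesis by (simp add: G'_def c_def dj)
        next
          case False
          then have "n > int d" using n by simp
          then show ?thesis using Suc.prems(1)[of e] dj by (simp add: G'_def degle_def)
        qed
      qed
    next
      fix n show "cv (\<lambda>e. fls_nth (G' e) n)"
        unfolding G'_def fls_minus_nth fls_mult_const_nth
        by (intro cv_diff cv_mult Suc.prems(2) cvc cv_const)
    next
      show "eventually (\<lambda>e. degle (eval_lam (\<alpha>' e) + eval_lam (\<beta> e) * (h + fls_const e * f) - G' e) (-1)) (at 0)"
        using Suc.prems(3) by eventually_elim (simp add: \<alpha>'_def G'_def eval_lam_monom algebra_simps)
    qed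
    have a_eq: "\<alpha> e = \<alpha>' e + monom (c e) j" for e by (simp add: \<alpha>'_def)
    show ?thesis
    proof (intro conjI allI)
      fix j' show "cv (\<lambda>e. coeff (\<alpha> e) j')"
      proof -
        have "cv (\<lambda>e. if j = j' then c e else 0)" by (cases "j = j'") (simp_all add: cvc)
        then show ?thesis unfolding a_eq coeff_add coeff_monom using IH by (intro cv_add) auto
      qed
    next
      fix j' show "cv (\<lambda>e. coeff (\<beta> e) j')" using IH by blast
    next
      fix n
      have "fls_nth (eval_lam (\<alpha> e) + eval_lam (\<beta> e) * (h + fls_const e * f)) n
        = fls_nth (eval_lam (\<alpha>' e) + eval_lam (\<beta> e) * (h + fls_const e * f)) n
          + c e * (if n = int (2 * j) then 1 else 0)" for e
        unfolding a_eq eval_lam_add eval_lam_monom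
        by (simp add: algebra_simps)
      then show "cv (\<lambda>e. fls_nth (eval_lam (\<alpha> e) + eval_lam (\<beta> e) * (h + fls_const e * f)) n)"
        using IH cvc by (simp only:, intro cv_add cv_mult cv_const) auto
    qed
  next
    case False
    then have dj: "int d = 2 * int j + 1" by (auto simp: j_def elim!: oddE)
    define \<beta>' where "\<beta>' e = \<beta> e - monom (c e) j" for e
    define G' where "G' e = G e - fls_const (c e) * fls_X ^ (2 * j) * (h + fls_const e * f)" for e
    have hn: "fls_nth (h + fls_const e * f) n = (if n = 1 then 1 else 0)" if "n \<ge> 0" for n e
      using is_h_nth[OF is_h_eps[OF h f] that] .
    have XX: "fls_nth (fls_X ^ (2 * j) * F) n = fls_nth F (n - 2 * int j)" for F :: "complex fls" and n
      by (simp add: fls_X_power_times_conv_shift)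
    have IH: "(\<forall>j. cv (\<lambda>e. coeff (\<alpha> e) j)) \<and> (\<forall>j. cv (\<lambda>e. coeff (\<beta>' e) j)) \<and>
     (\<forall>n. cv (\<lambda>e. fls_nth (eval_lam (\<alpha> e) + eval_lam (\<beta>' e) * (h + fls_const e * f)) n))"
    proof (rule Suc.IH)
      fix e show "degle (G' e) (int d - 1)"
        unfolding degle_def
      proof (intro allI impI)
        fix n :: int assume n: "int d - 1 < n"
        have "fls_nth (G' e) n = fls_nth (G e) n - c e * fls_nth (h + fls_const e * f) (n - 2 * int j)"
          unfolding G'_def fls_minus_nth mult.assoc fls_mult_const_nth XX ..
        also have "\<dots> = 0"
        proof (cases "n = int d")
          case True then show ?thesis using hn[of "n - 2 * int j" e] dj by (simp add: c_def)
        next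
          case False
          then have "n > int d" using n by simp
          then show ?thesis using Suc.prems(1)[of e] dj hn[of "n - 2 * int j" e] by (simp add: degle_def)
        qed
        finally show "fls_nth (G' e) n = 0" .
      qed
    next
      fix n show "cv (\<lambda>e. fls_nth (G' e) n)"
        unfolding G'_def fls_minus_nth mult.assoc fls_mult_const_nth XX fls_plus_nth
        by (intro cv_diff cv_mult cv_add Suc.prems(2) cvc cv_const cv_id)
    next
      show "eventually (\<lambda>e. degle (eval_lam (\<alpha> e) + eval_lam (\<beta>' e) * (h + fls_const e * f) - G' e) (-1)) (at 0)"
        using Suc.prems(3) by eventually_elim (simp add: \<beta>'_def G'_def eval_lam_monom algebra_simps)
    qed
    have b_eq: "\<beta> e = \<beta>' e + monom (c e) j" for e by (simp add: \<beta>'_def)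
    show ?thesis
    proof (intro conjI allI)
      fix j' show "cv (\<lambda>e. coeff (\<alpha> e) j')" using IH by blast
    next
      fix j' show "cv (\<lambda>e. coeff (\<beta> e) j')"
      proof -
        have "cv (\<lambda>e. if j = j' then c e else 0)" by (cases "j = j'") (simp_all add: cvc)
        then show ?thesis unfolding b_eq coeff_add coeff_monom using IH by (intro cv_add) auto
      qed
    next
      fix n
      have E: "fls_nth (eval_lam (\<alpha> e) + eval_lam (\<beta> e) * (h + fls_const e * f)) n
        = fls_nth (eval_lam (\<alpha> e) + eval_lam (\<beta>' e) * (h + fls_const e * f)) n
          + c e * (fls_nth h (n - 2 * int j) + e * fls_nth f (n - 2 * int j))" for e
      proof -
        have "eval_lam (\<beta> e) * (h + fls_const e * f) = eval_lam (\<beta>' e) * (h + fls_const e * f)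
           + fls_const (c e) * (fls_X ^ (2 * j) * (h + fls_const e * f))"
          unfolding b_eq eval_lam_add eval_lam_monom by (simp add: algebra_simps)
        moreover have "fls_nth (fls_X ^ (2 * j) * (h + fls_const e * f)) n = fls_nth h (n - 2 * int j) + e * fls_nth f (n - 2 * int j)"
          by (simp add: fls_X_power_times_conv_shift)
        ultimately show ?thesis by simp
      qed
      have cvA: "cv (\<lambda>e. fls_nth (eval_lam (\<alpha> e) + eval_lam (\<beta>' e) * (h + fls_const e * f)) n)"
        using IH by blast
      show "cv (\<lambda>e. fls_nth (eval_lam (\<alpha> e) + eval_lam (\<beta> e) * (h + fls_const e * f)) n)"
        unfolding E by (intro cv_add cv_mult cvA cvc cv_const cv_id)
    qed
  qed
qed



lemma two_ne_one: "(2::2) \<noteq> 1" by simp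

lemma mat2_mult:
  "mat2 a b c d ** mat2 a' b' c' d' =
   mat2 (a*a' + b*c') (a*b' + b*d') (c*a' + d*c') (c*b' + d*d')"
  unfolding mat2_def matrix_matrix_mult_def
  by (simp add: vec_eq_iff forall_2 sum_2)

lemma mat2_diff: "mat2 a b c d - mat2 a' b' c' d' = mat2 (a - a') (b - b') (c - c') (d - d')"
  unfolding mat2_def by (simp add: vec_eq_iff forall_2)

lemma mat2_add: "mat2 a b c d + mat2 a' b' c' d' = mat2 (a + a') (b + b') (c + c') (d + d')"
  unfolding mat2_def by (simp add: vec_eq_iff forall_2)

lemma cscale_mat2: "cscale x (mat2 a b c d) = mat2 (smult x a) (smult x b) (smult x c) (smult x d)"
  unfolding mat2_def cscale_def by (simp add: vec_eq_iff forall_2)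

lemma plus_mat_mat2: "plus_mat k (mat2 a b c d) = mat2 (plus_shift k a) (plus_shift k b) (plus_shift k c) (plus_shift k d)"
  unfolding mat2_def plus_mat_def by (simp add: vec_eq_iff forall_2)

lemma comm_mat2:
  "comm (mat2 a b c d) (mat2 a' b' c' d') =
   mat2 (a*a' + b*c' - (a'*a + b'*c)) (a*b' + b*d' - (a'*b + b'*d))
        (c*a' + d*c' - (c'*a + d'*c)) (c*b' + d*d' - (c'*b + d'*d))"
  unfolding comm_def mat2_mult mat2_diff ..

lemma comm_shift:
  "comm (mat2 p' q' (a' + [:\<delta>:]) b') (mat2 p q a b)
   = comm (mat2 p' q' a' b') (mat2 p q a b) + cscale \<delta> (comm Amat (mat2 p q a b))"
  unfolding Amat_def comm_mat2 cscale_mat2 mat2_add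
  by (simp add: algebra_simps smult_add_right smult_diff_right)

lemma coeff_plus_shift: "coeff (plus_shift k p) j = coeff p (j + k)"
  unfolding plus_shift_def by (simp add: nth_default_drop nth_default_coeffs_eq)

lemma plus_shift_low:
  "degle (eval_lam p - fls_X ^ (2 * k) * eval_lam (plus_shift k p)) (2 * int k - 2)"
  unfolding degle_def
proof (intro allI impI)
  fix n :: int assume n: "2 * int k - 2 < n"
  have X: "fls_nth (fls_X ^ (2 * k) * eval_lam (plus_shift k p)) n = fls_nth (eval_lam (plus_shift k p)) (n - 2 * int k)"
    by (simp add: fls_X_power_times_conv_shift)
  show "fls_nth (eval_lam p - fls_X ^ (2 * k) * eval_lam (plus_shift k p)) n = 0"
  proof (cases "even n")
    case True
    then have "n \<ge> 2 * int k" using n by (auto elim!: evenE)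
    moreover have "nat ((n - 2 * int k) div 2) + k = nat (n div 2)" using True \<open>n \<ge> 2 * int k\<close>
      by (auto elim!: evenE)
    ultimately show ?thesis using True unfolding fls_minus_nth X eval_lam_nth coeff_plus_shift
      by auto
  next
    case False
    then show ?thesis unfolding fls_minus_nth X eval_lam_nth by auto
  qed
qed



lemma shiftW:
  assumes h: "is_h h" and n: "n \<ge> 0"
  shows "fls_nth (eval_lam (plus_shift k x) + eval_lam (plus_shift k y) * h) n
       = fls_nth (eval_lam x + eval_lam y * h) (n + 2 * int k)"
proof -
  define W where "W = eval_lam (plus_shift k x) + eval_lam (plus_shift k y) * h"
  define Dx where "Dx = eval_lam x - fls_X ^ (2 * k) * eval_lam (plus_shift k x)"
  define Dy where "Dy = eval_lam y - fls_X ^ (2 * k) * eval_lam (plus_shift k y)"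
  have dx: "degle Dx (2 * int k - 1)" unfolding Dx_def using plus_shift_low by (rule degle_mono) simp
  have dy: "degle (Dy * h) (2 * int k - 1)"
    using degle_mult[OF plus_shift_low[of y k] degle_h[OF h]] by (simp add: Dy_def)
  have E: "eval_lam x + eval_lam y * h = fls_X ^ (2 * k) * W + (Dx + Dy * h)"
    by (simp add: W_def Dx_def Dy_def algebra_simps)
  have "fls_nth (Dx + Dy * h) (n + 2 * int k) = 0"
    using degle_add[OF dx dy] n by (intro degleD) auto
  moreover have "fls_nth (fls_X ^ (2 * k) * W) (n + 2 * int k) = fls_nth W n"
    by (simp add: fls_X_power_times_conv_shift)
  ultimately show ?thesis unfolding E W_def by simp
qed

lemma row1_shift:
  assumes h: "is_h h" and N: "N = m + 2 * k"
    and mu: "Hs h N = eval_lam p + eval_lam q * h"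
    and Hm: "Hs h m = eval_lam p' + eval_lam q' * h"
  shows "plus_shift k p = p' \<and> plus_shift k q = q'"
proof -
  have "degle (eval_lam (plus_shift k p - p') + eval_lam (plus_shift k q - q') * h) (-1)"
    unfolding degle_def
  proof (intro allI impI)
    fix n :: int assume n: "-1 < n"
    have "fls_nth (eval_lam (plus_shift k p) + eval_lam (plus_shift k q) * h) n
        = fls_nth (Hs h N) (n + 2 * int k)"
      using shiftW[OF h, of n k p q] n mu by simp
    also have "\<dots> = fls_nth (fls_X ^ N) (n + 2 * int k)"
      using Hs_low[OF h, of N] n by (auto simp: degle_def)
    also have "\<dots> = fls_nth (fls_X ^ m) n" using N by simp
    also have "\<dots> = fls_nth (Hs h m) n"
      using Hs_low[OF h, of m] n by (auto simp: degle_def)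
    finally show "fls_nth (eval_lam (plus_shift k p - p') + eval_lam (plus_shift k q - q') * h) n = 0"
      using Hm by (simp add: algebra_simps)
  qed
  then have "plus_shift k p - p' = 0 \<and> plus_shift k q - q' = 0" by (rule uniq0[OF h])
  then show ?thesis by simp
qed

lemma row2_shift:
  assumes h: "is_h h" and N: "N = m + 2 * k" and k: "k \<ge> 1"
    and mu: "Rs h N = eval_lam a + eval_lam b * h"
    and R: "Rs h N = h * Hs h N"
    and Rm: "Rs h m = eval_lam a' + eval_lam b' * h"
  shows "plus_shift k a = a' + [:- fls_nth (Hs h m) (-1):] \<and> plus_shift k b = b'"
proof -
  define \<delta> where "\<delta> = - fls_nth (Hs h m) (-1)"
  define S where "S = Hs h N - fls_X ^ N"
  define T where "T = Hs h m - fls_X ^ m"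
  have S: "degle S (-1)" using Hs_low[OF h] by (simp add: S_def)
  have T: "degle T (-1)" using Hs_low[OF h] by (simp add: T_def)
  have hS: "degle (h * S - fls_const (fls_nth S (-1))) (-1)" by (rule hT_low[OF h S])
  have hT: "degle (h * T - fls_const (fls_nth T (-1))) (-1)" by (rule hT_low[OF h T])
  have fl: "degle (flow h m) (-1)" by (rule flow_low[OF h])
  have "degle (eval_lam (plus_shift k a - (a' + [:\<delta>:])) + eval_lam (plus_shift k b - b') * h) (-1)"
    unfolding degle_def
  proof (intro allI impI)
    fix n :: int assume n: "-1 < n"
    have "fls_nth (eval_lam (plus_shift k a) + eval_lam (plus_shift k b) * h) n
        = fls_nth (h * Hs h N) (n + 2 * int k)"
      using shiftW[OF h, of n k a b] n mu R by simp
    also have "\<dots> = fls_nth (h * fls_X ^ N) (n + 2 * int k) + fls_nth (h * S) (n + 2 * int k)"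
      by (simp add: S_def algebra_simps)
    also have "fls_nth (h * S) (n + 2 * int k) = 0"
      using hS n k by (auto simp: degle_def)
    also have "fls_nth (h * fls_X ^ N) (n + 2 * int k) = fls_nth (h * fls_X ^ m) n"
      using N by (simp add: fls_X_power_times_conv_shift)
    also have "fls_nth (h * fls_X ^ m) n = fls_nth (h * Hs h m) n - fls_nth (h * T) n"
      by (simp add: T_def algebra_simps)
    also have "fls_nth (h * T) n = (if n = 0 then fls_nth T (-1) else 0)"
      using hT n by (auto simp: degle_def)
    also have "fls_nth T (-1) = - \<delta>" by (simp add: T_def \<delta>_def)
    also have "fls_nth (h * Hs h m) n = fls_nth (Rs h m) n"
      using fl n by (auto simp: degle_def flow_def)
    finally have F: "fls_nth (eval_lam (plus_shift k a) + eval_lam (plus_shift k b) * h) n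
       = fls_nth (Rs h m) n - (if n = 0 then - \<delta> else 0)" by simp
    have X: "fls_nth (eval_lam (plus_shift k a - (a' + [:\<delta>:])) + eval_lam (plus_shift k b - b') * h) n
      = fls_nth (eval_lam (plus_shift k a) + eval_lam (plus_shift k b) * h) n
        - fls_nth (eval_lam a' + eval_lam b' * h) n - (if n = 0 then \<delta> else 0)"
      by (simp add: algebra_simps)
    show "fls_nth (eval_lam (plus_shift k a - (a' + [:\<delta>:])) + eval_lam (plus_shift k b - b') * h) n = 0"
      unfolding X F Rm by simp
  qed
  then have "plus_shift k a - (a' + [:\<delta>:]) = 0 \<and> plus_shift k b - b' = 0" by (rule uniq0[OF h])
  then show ?thesis by (simp add: \<delta>_def)
qed



lemma fls_const_inv_sq:
  assumes "e \<noteq> 0"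
  shows "fls_const (1 / e^2) * (fls_const e * fls_const e) = (1 :: complex fls)"
  using assms by (simp add: power2_eq_square)

lemma smult_inv_sq:
  assumes "e \<noteq> 0"
  shows "smult (e^2) (smult (1 / e^2) (Y :: complex poly)) = Y"
  using assms by simp

lemma row1_deriv:
  fixes h f :: "complex fls" and P Q :: "complex \<Rightarrow> complex poly"
  assumes h: "is_h h" and f: "degle f (-1)"
    and PQ: "\<And>e. Hs (h + fls_const e * f) N = eval_lam (P e) + eval_lam (Q e) * (h + fls_const e * f)"
    and A1: "eval_lam P1 + eval_lam Q1 * h = - (eval_lam (Q 0) * f)"
  defines "Tf \<equiv> \<lambda>e. fls_const (1 / e^2) * (Hs (h + fls_const e * f) N - Hs h N)"
  shows "(\<forall>j. ((\<lambda>e. coeff (P e) j) has_field_derivative coeff P1 j) (at 0))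
       \<and> (\<forall>j. ((\<lambda>e. coeff (Q e) j) has_field_derivative coeff Q1 j) (at 0))
       \<and> (\<forall>e. e \<noteq> 0 \<longrightarrow> Hs (h + fls_const e * f) N - Hs h N = fls_const e * fls_const e * Tf e)
       \<and> (\<forall>e. degle (Tf e) (-1)) \<and> cv (\<lambda>e. fls_nth (Tf e) (-1))"
proof -
  define he where "he e = h + fls_const e * f" for e
  have he0: "he 0 = h" by (simp add: he_def)
  have PQ0: "Hs h N = eval_lam (P 0) + eval_lam (Q 0) * h" using PQ[of 0] by simp
  define \<alpha> where "\<alpha> e = smult (1 / e^2) (P e - P 0 - smult e P1)" for e
  define \<beta> where "\<beta> e = smult (1 / e^2) (Q e - Q 0 - smult e Q1)" for e
  have key: "eval_lam (P e - P 0 - smult e P1) + eval_lam (Q e - Q 0 - smult e Q1) * he e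
      = (Hs (he e) N - Hs h N) - fls_const e * fls_const e * (eval_lam Q1 * f)" for e
  proof -
    have "eval_lam (P e - P 0 - smult e P1) + eval_lam (Q e - Q 0 - smult e Q1) * he e
      = (eval_lam (P e) + eval_lam (Q e) * he e) - (eval_lam (P 0) + eval_lam (Q 0) * h)
        - fls_const e * (eval_lam P1 + eval_lam Q1 * h + eval_lam (Q 0) * f)
        - fls_const e * fls_const e * (eval_lam Q1 * f)"
      by (simp add: he_def algebra_simps)
    also have "eval_lam P1 + eval_lam Q1 * h + eval_lam (Q 0) * f = 0" using A1 by simp
    finally show ?thesis using PQ[of e] PQ0 by (simp add: he_def)
  qed
  have Tfe: "Tf e = fls_const (1 / e^2) * (Hs (he e) N - Hs h N)" for e
    by (simp add: Tf_def he_def)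
  have low: "degle (Tf e) (-1)" for e
  proof -
    have "degle (Hs (he e) N - fls_X ^ N) (-1)" using Hs_low[OF is_h_eps[OF h f]] by (simp add: he_def)
    moreover have "degle (Hs h N - fls_X ^ N) (-1)" using Hs_low[OF h] by simp
    ultimately have "degle ((Hs (he e) N - fls_X ^ N) - (Hs h N - fls_X ^ N)) (-1)" by (rule degle_diff)
    then show ?thesis unfolding Tfe by (intro degle_const_mult) simp
  qed
  have ab_eq: "eval_lam (\<alpha> e) + eval_lam (\<beta> e) * he e = Tf e - eval_lam Q1 * f" if "e \<noteq> 0" for e
  proof -
    have "eval_lam (\<alpha> e) + eval_lam (\<beta> e) * he e
       = fls_const (1 / e^2) * (eval_lam (P e - P 0 - smult e P1) + eval_lam (Q e - Q 0 - smult e Q1) * he e)"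
      by (simp add: \<alpha>_def \<beta>_def algebra_simps)
    also have "\<dots> = Tf e - fls_const (1 / e^2) * (fls_const e * fls_const e) * (eval_lam Q1 * f)"
      unfolding key Tfe by (simp add: algebra_simps)
    finally show ?thesis using fls_const_inv_sq[OF that] by simp
  qed
  have B: "(\<forall>j. cv (\<lambda>e. coeff (\<alpha> e) j)) \<and> (\<forall>j. cv (\<lambda>e. coeff (\<beta> e) j)) \<and>
     (\<forall>n. cv (\<lambda>e. fls_nth (eval_lam (\<alpha> e) + eval_lam (\<beta> e) * (h + fls_const e * f)) n))"
  proof (rule bound[OF h f, where d="2 * degree Q1"])
    fix e show "degle (- (eval_lam Q1 * f)) (int (2 * degree Q1) - 1)"
      using degle_mult[OF degle_eval[of Q1] f] by (intro degle_uminus) simp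
  next
    fix n show "cv (\<lambda>e. fls_nth (- (eval_lam Q1 * f)) n)" by simp
  next
    show "eventually (\<lambda>e. degle (eval_lam (\<alpha> e) + eval_lam (\<beta> e) * (h + fls_const e * f) - - (eval_lam Q1 * f)) (-1)) (at 0)"
      unfolding eventually_at_filter
      by (intro always_eventually allI impI) (simp add: ab_eq[unfolded he_def] low)
  qed
  have dP: "((\<lambda>e. coeff (P e) j) has_field_derivative coeff P1 j) (at 0)" for j
  proof (rule deriv_lemma)
    show "cv (\<lambda>e. coeff (\<alpha> e) j)" using B by blast
    fix e :: complex assume e: "e \<noteq> 0"
    have "P e = P 0 + smult e P1 + smult (e^2) (\<alpha> e)" using e by (simp add: \<alpha>_def)
    then show "coeff (P e) j = coeff (P 0) j + e * coeff P1 j + e^2 * coeff (\<alpha> e) j" by simp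
  qed simp
  have dQ: "((\<lambda>e. coeff (Q e) j) has_field_derivative coeff Q1 j) (at 0)" for j
  proof (rule deriv_lemma)
    show "cv (\<lambda>e. coeff (\<beta> e) j)" using B by blast
    fix e :: complex assume e: "e \<noteq> 0"
    have "Q e = Q 0 + smult e Q1 + smult (e^2) (\<beta> e)" using e by (simp add: \<beta>_def)
    then show "coeff (Q e) j = coeff (Q 0) j + e * coeff Q1 j + e^2 * coeff (\<beta> e) j" by simp
  qed simp
  have TT: "Hs (h + fls_const e * f) N - Hs h N = fls_const e * fls_const e * Tf e" if "e \<noteq> 0" for e
  proof -
    have "fls_const e * fls_const e * Tf e = (fls_const (1 / e^2) * (fls_const e * fls_const e)) * (Hs (he e) N - Hs h N)"
      unfolding Tfe by (simp only: mult_ac)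
    then show ?thesis using fls_const_inv_sq[OF that] by (simp add: he_def)
  qed
  have cvT: "cv (\<lambda>e. fls_nth (Tf e) (-1))"
  proof (rule cv_ev)
    show "eventually (\<lambda>e. fls_nth (Tf e) (-1) = fls_nth (eval_lam (\<alpha> e) + eval_lam (\<beta> e) * (h + fls_const e * f)) (-1) + fls_nth (eval_lam Q1 * f) (-1)) (at 0)"
      unfolding eventually_at_filter
      by (intro always_eventually allI impI) (simp add: ab_eq[unfolded he_def])
    show "cv (\<lambda>e. fls_nth (eval_lam (\<alpha> e) + eval_lam (\<beta> e) * (h + fls_const e * f)) (-1) + fls_nth (eval_lam Q1 * f) (-1))"
      using B by (intro cv_add) auto
  qed
  show ?thesis using dP dQ TT low cvT by blast
qed

lemma row2_deriv:
  fixes h f :: "complex fls" and A B :: "complex \<Rightarrow> complex poly" and Tf :: "complex \<Rightarrow> complex fls"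
  assumes h: "is_h h" and f: "degle f (-1)"
    and AB: "\<And>e. Rs (h + fls_const e * f) N = eval_lam (A e) + eval_lam (B e) * (h + fls_const e * f)"
    and R0: "Rs h N = h * Hs h N"
    and A2: "eval_lam A1 + eval_lam B1 * h = (Hs h N - eval_lam (B 0)) * f"
    and TT: "\<And>e. e \<noteq> 0 \<Longrightarrow> Hs (h + fls_const e * f) N - Hs h N = fls_const e * fls_const e * Tf e"
    and low: "\<And>e. degle (Tf e) (-1)" and cvT: "cv (\<lambda>e. fls_nth (Tf e) (-1))"
  shows "(\<forall>j. ((\<lambda>e. coeff (A e) j) has_field_derivative coeff A1 j) (at 0))
       \<and> (\<forall>j. ((\<lambda>e. coeff (B e) j) has_field_derivative coeff B1 j) (at 0))"
proof -
  define he where "he e = h + fls_const e * f" for e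
  have AB0: "Rs h N = eval_lam (A 0) + eval_lam (B 0) * h" using AB[of 0] by simp
  define \<alpha> where "\<alpha> e = smult (1 / e^2) (A e - A 0 - smult e A1)" for e
  define \<beta> where "\<beta> e = smult (1 / e^2) (B e - B 0 - smult e B1)" for e
  have key: "eval_lam (A e - A 0 - smult e A1) + eval_lam (B e - B 0 - smult e B1) * he e
      = flow (he e) N + fls_const e * fls_const e * (he e * Tf e - eval_lam B1 * f)" if "e \<noteq> 0" for e
  proof -
    have "eval_lam (A e - A 0 - smult e A1) + eval_lam (B e - B 0 - smult e B1) * he e
      = (eval_lam (A e) + eval_lam (B e) * he e) - (eval_lam (A 0) + eval_lam (B 0) * h)
        - fls_const e * (eval_lam A1 + eval_lam B1 * h + eval_lam (B 0) * f)
        - fls_const e * fls_const e * (eval_lam B1 * f)"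
      by (simp add: he_def algebra_simps)
    also have "eval_lam A1 + eval_lam B1 * h + eval_lam (B 0) * f = Hs h N * f" using A2 by (simp add: algebra_simps)
    also have "eval_lam (A e) + eval_lam (B e) * he e = flow (he e) N + he e * Hs (he e) N"
      using AB[of e] by (simp add: he_def flow_def algebra_simps)
    also have "eval_lam (A 0) + eval_lam (B 0) * h = h * Hs h N" using AB0 R0 by simp
    also have "Hs (he e) N = Hs h N + fls_const e * fls_const e * Tf e" using TT[OF that] by (simp add: he_def algebra_simps)
    finally show ?thesis by (simp add: he_def algebra_simps)
  qed
  have ab_eq: "eval_lam (\<alpha> e) + eval_lam (\<beta> e) * he e
      = fls_const (1 / e^2) * flow (he e) N + (he e * Tf e - eval_lam B1 * f)" if "e \<noteq> 0" for e
  proof -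
    have "eval_lam (\<alpha> e) + eval_lam (\<beta> e) * he e
       = fls_const (1 / e^2) * (eval_lam (A e - A 0 - smult e A1) + eval_lam (B e - B 0 - smult e B1) * he e)"
      by (simp add: \<alpha>_def \<beta>_def algebra_simps)
    also have "\<dots> = fls_const (1 / e^2) * flow (he e) N + (fls_const (1 / e^2) * (fls_const e * fls_const e)) * (he e * Tf e - eval_lam B1 * f)"
      unfolding key[OF that] by (simp add: algebra_simps)
    finally show ?thesis using fls_const_inv_sq[OF that] by simp
  qed
  define G where "G e = fls_const (fls_nth (Tf e) (-1)) - eval_lam B1 * f" for e
  have Bd: "(\<forall>j. cv (\<lambda>e. coeff (\<alpha> e) j)) \<and> (\<forall>j. cv (\<lambda>e. coeff (\<beta> e) j)) \<and>
     (\<forall>n. cv (\<lambda>e. fls_nth (eval_lam (\<alpha> e) + eval_lam (\<beta> e) * (h + fls_const e * f)) n))"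
  proof (rule bound[OF h f, where d="2 * degree B1 + 1" and G=G])
    fix e
    have "degle (eval_lam B1 * f) (2 * int (degree B1) + (-1))" by (rule degle_mult[OF degle_eval f])
    then have "degle (eval_lam B1 * f) (int (2 * degree B1 + 1) - 1)" by (rule degle_mono) simp
    moreover have "degle (fls_const (fls_nth (Tf e) (-1))) (int (2 * degree B1 + 1) - 1)"
      by (rule degle_const) simp
    ultimately show "degle (G e) (int (2 * degree B1 + 1) - 1)" unfolding G_def by (rule degle_diff[rotated])
  next
    fix n show "cv (\<lambda>e. fls_nth (G e) n)"
      unfolding G_def fls_minus_nth fls_const_nth
      by (intro cv_diff) (cases "n = 0", simp_all add: cvT)
  next
    show "eventually (\<lambda>e. degle (eval_lam (\<alpha> e) + eval_lam (\<beta> e) * (h + fls_const e * f) - G e) (-1)) (at 0)"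
      unfolding eventually_at_filter
    proof (intro always_eventually allI impI)
      fix e :: complex assume e: "e \<noteq> 0"
      have "eval_lam (\<alpha> e) + eval_lam (\<beta> e) * (h + fls_const e * f) - G e
        = fls_const (1 / e^2) * flow (he e) N + (he e * Tf e - fls_const (fls_nth (Tf e) (-1)))"
        using ab_eq[OF e] by (simp add: G_def he_def)
      moreover have "degle (fls_const (1 / e^2) * flow (he e) N) (-1)"
        using flow_low[OF is_h_eps[OF h f]] by (intro degle_const_mult) (simp add: he_def)
      moreover have "degle (he e * Tf e - fls_const (fls_nth (Tf e) (-1))) (-1)"
        using hT_low[OF is_h_eps[OF h f] low] by (simp add: he_def)
      ultimately show "degle (eval_lam (\<alpha> e) + eval_lam (\<beta> e) * (h + fls_const e * f) - G e) (-1)"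
        by (simp add: degle_add)
    qed
  qed
  have dA: "((\<lambda>e. coeff (A e) j) has_field_derivative coeff A1 j) (at 0)" for j
  proof (rule deriv_lemma)
    show "cv (\<lambda>e. coeff (\<alpha> e) j)" using Bd by blast
    fix e :: complex assume e: "e \<noteq> 0"
    have "A e = A 0 + smult e A1 + smult (e^2) (\<alpha> e)" using e by (simp add: \<alpha>_def)
    then show "coeff (A e) j = coeff (A 0) j + e * coeff A1 j + e^2 * coeff (\<alpha> e) j" by simp
  qed simp
  have dB: "((\<lambda>e. coeff (B e) j) has_field_derivative coeff B1 j) (at 0)" for j
  proof (rule deriv_lemma)
    show "cv (\<lambda>e. coeff (\<beta> e) j)" using Bd by blast
    fix e :: complex assume e: "e \<noteq> 0"
    have "B e = B 0 + smult e B1 + smult (e^2) (\<beta> e)" using e by (simp add: \<beta>_def)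
    then show "coeff (B e) j = coeff (B 0) j + e * coeff B1 j + e^2 * coeff (\<beta> e) j" by simp
  qed simp
  show ?thesis using dA dB by blast
qed



lemma alg1:
  fixes P Q Aa B P' Q' A' B' h :: "complex fls"
  assumes E: "Aa + B * h = h * (P + Q * h)"
  shows "(P' * P + Q' * Aa - (P * P' + Q * A')) + (P' * Q + Q' * B - (P * Q' + Q * B')) * h
       = - (Q * (- h * (P' + Q' * h) + (A' + B' * h)))"
proof -
  have "(P' * P + Q' * Aa - (P * P' + Q * A')) + (P' * Q + Q' * B - (P * Q' + Q * B')) * h
       - (- (Q * (- h * (P' + Q' * h) + (A' + B' * h)))) = Q' * ((Aa + B * h) - h * (P + Q * h))"
    by (simp add: algebra_simps)
  also have "\<dots> = 0" using E by simp
  finally show ?thesis by (rule right_minus_eq[THEN iffD1])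
qed

lemma alg2:
  fixes P Q Aa B P' Q' A' B' h :: "complex fls"
  assumes E: "Aa + B * h = h * (P + Q * h)"
  shows "(A' * P + B' * Aa - (Aa * P' + B * A')) + (A' * Q + B' * B - (Aa * Q' + B * B')) * h
       = ((P + Q * h) - B) * (- h * (P' + Q' * h) + (A' + B' * h))"
proof -
  have "(A' * P + B' * Aa - (Aa * P' + B * A')) + (A' * Q + B' * B - (Aa * Q' + B * B')) * h
       - ((P + Q * h) - B) * (- h * (P' + Q' * h) + (A' + B' * h))
       = (B' - P' - Q' * h) * ((Aa + B * h) - h * (P + Q * h))"
    by (simp add: algebra_simps)
  also have "\<dots> = 0" using E by simp
  finally show ?thesis by (rule right_minus_eq[THEN iffD1])
qed

theorem mainTheorem6:
  fixes g i :: nat and h :: "complex fls"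
  assumes "g \<ge> 1" and "i < g" and "is_h h" and "flow h (2 * g + 1) = 0"
  shows "\<exists>D c.
     (\<forall>r s n. ((\<lambda>\<epsilon>. coeff (Vmat (h + fls_const \<epsilon> * flow h (2 * i + 1)) (2 * g + 1) $ r $ s) n)
                 has_field_derivative coeff (D $ r $ s) n) (at 0))
   \<and> comm (plus_mat (g - i) (Vmat h (2 * g + 1))) (Vmat h (2 * g + 1))
       = D + cscale c (comm Amat (Vmat h (2 * g + 1)))"
proof -
  let ?N = "2 * g + 1" and ?m = "2 * i + 1" and ?k = "g - i"
  have h: "is_h h" by fact
  have Nmk: "?N = ?m + 2 * ?k" using assms(2) by simp
  have k1: "?k \<ge> 1" using assms(2) by simp
  let ?f = "flow h ?m"
  have fl: "degle ?f (-1)" by (rule flow_low[OF h])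
  let ?he = "\<lambda>e. h + fls_const e * ?f"
  have he: "is_h (?he e)" for e by (rule is_h_eps[OF h fl])
  define P where "P e = fst (decomp (?he e) (Hs (?he e) ?N))" for e
  define Q where "Q e = snd (decomp (?he e) (Hs (?he e) ?N))" for e
  define A where "A e = fst (decomp (?he e) (Rs (?he e) ?N))" for e
  define B where "B e = snd (decomp (?he e) (Rs (?he e) ?N))" for e
  have PQ: "Hs (?he e) ?N = eval_lam (P e) + eval_lam (Q e) * ?he e" for e
    unfolding P_def Q_def by (rule decomp_spec[OF he Hs_inW])
  have AB: "Rs (?he e) ?N = eval_lam (A e) + eval_lam (B e) * ?he e" for e
    unfolding A_def B_def by (rule decomp_spec[OF he Rs_inW])
  have Vme: "Vmat (?he e) ?N = mat2 (P e) (Q e) (A e) (B e)" for e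
    unfolding Vmat_def P_def Q_def A_def B_def ..
  define p where "p = P 0"
  define q where "q = Q 0"
  define a where "a = A 0"
  define b where "b = B 0"
  have mu: "Hs h ?N = eval_lam p + eval_lam q * h" using PQ[of 0] by (simp only: p_def q_def mult_zero_left fls_const_0 add_0_right)
  have RN: "Rs h ?N = eval_lam a + eval_lam b * h" using AB[of 0] by (simp only: a_def b_def mult_zero_left fls_const_0 add_0_right)
  have V: "Vmat h ?N = mat2 p q a b" using Vme[of 0] by (simp only: p_def q_def a_def b_def mult_zero_left fls_const_0 add_0_right)
  have R0: "Rs h ?N = h * Hs h ?N"
  proof -
    have "- h * Hs h ?N + Rs h ?N = 0" using assms(4) by (simp only: flow_def)
    then show ?thesis by (simp add: add_eq_0_iff2 eq_neg_iff_add_eq_0 add.commute)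
  qed
  define p' where "p' = fst (decomp h (Hs h ?m))"
  define q' where "q' = snd (decomp h (Hs h ?m))"
  define a' where "a' = fst (decomp h (Rs h ?m))"
  define b' where "b' = snd (decomp h (Rs h ?m))"
  have Hm: "Hs h ?m = eval_lam p' + eval_lam q' * h"
    unfolding p'_def q'_def by (rule decomp_spec[OF h Hs_inW])
  have Rm: "Rs h ?m = eval_lam a' + eval_lam b' * h"
    unfolding a'_def b'_def by (rule decomp_spec[OF h Rs_inW])
  have U: "Vmat h ?m = mat2 p' q' a' b'" unfolding Vmat_def p'_def q'_def a'_def b'_def ..
  have fdef: "?f = - h * (eval_lam p' + eval_lam q' * h) + (eval_lam a' + eval_lam b' * h)"
    unfolding flow_def Hm Rm ..
  have E: "eval_lam a + eval_lam b * h = h * (eval_lam p + eval_lam q * h)" using R0 mu RN by (simp only:)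
  define C11 where "C11 = p' * p + q' * a - (p * p' + q * a')"
  define C12 where "C12 = p' * q + q' * b - (p * q' + q * b')"
  define C21 where "C21 = a' * p + b' * a - (a * p' + b * a')"
  define C22 where "C22 = a' * q + b' * b - (a * q' + b * b')"
  have D: "comm (mat2 p' q' a' b') (mat2 p q a b) = mat2 C11 C12 C21 C22"
    unfolding comm_mat2 C11_def C12_def C21_def C22_def ..
  have A1: "eval_lam C11 + eval_lam C12 * h = - (eval_lam (Q 0) * ?f)"
    unfolding fdef C11_def C12_def q_def[symmetric] eval_lam_diff eval_lam_add eval_lam_mult
    by (rule alg1[OF E])
  have A2: "eval_lam C21 + eval_lam C22 * h = (Hs h ?N - eval_lam (B 0)) * ?f"
    unfolding fdef C21_def C22_def b_def[symmetric] mu eval_lam_diff eval_lam_add eval_lam_mult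
    by (rule alg2[OF E])
  note r1 = row1_deriv[OF h fl PQ A1]
  note TT = r1[THEN conjunct2, THEN conjunct2, THEN conjunct1, rule_format]
  note low = r1[THEN conjunct2, THEN conjunct2, THEN conjunct2, THEN conjunct1, rule_format]
  note cvT = r1[THEN conjunct2, THEN conjunct2, THEN conjunct2, THEN conjunct2]
  note r2 = row2_deriv[OF h fl AB R0 A2 TT low cvT]
  define \<delta> where "\<delta> = - fls_nth (Hs h ?m) (-1)"
  have s1: "plus_shift ?k p = p' \<and> plus_shift ?k q = q'"
    by (rule row1_shift[OF h Nmk mu Hm])
  have s2: "plus_shift ?k a = a' + [:\<delta>:] \<and> plus_shift ?k b = b'"
    unfolding \<delta>_def by (rule row2_shift[OF h Nmk k1 RN R0 Rm])
  show ?thesis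
  proof (intro exI conjI allI)
    fix r s :: 2 and n :: nat
    show "((\<lambda>e. coeff (Vmat (?he e) ?N $ r $ s) n) has_field_derivative
            coeff (comm (mat2 p' q' a' b') (mat2 p q a b) $ r $ s) n) (at 0)"
      unfolding Vme D
    proof -
      note dP = r1[THEN conjunct1, rule_format]
      note dQ = r1[THEN conjunct2, THEN conjunct1, rule_format]
      note dA = r2[THEN conjunct1, rule_format]
      note dB = r2[THEN conjunct2, rule_format]
      show "((\<lambda>e. coeff (mat2 (P e) (Q e) (A e) (B e) $ r $ s) n) has_field_derivative
            coeff (mat2 C11 C12 C21 C22 $ r $ s) n) (at 0)"
        by (cases "r = 1"; cases "s = 1") (simp_all add: mat2_def dP dQ dA dB)
    qed
  next
    show "comm (plus_mat ?k (Vmat h ?N)) (Vmat h ?N) =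
          comm (mat2 p' q' a' b') (mat2 p q a b) + cscale \<delta> (comm Amat (Vmat h ?N))"
      unfolding V plus_mat_mat2 s1[THEN conjunct1] s1[THEN conjunct2] s2[THEN conjunct1] s2[THEN conjunct2]
      by (rule comm_shift)
  qed
qed


end
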